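(* Let $(\Omega,+)$ be a group and $a,b$ subgroups. Then for $x,z\in a^\top$ and $y\in{}^\top b$ one has $\Gamma(x,a,y,b,z)\in a^\top$, and for $x,z\in{}^\top b$ and $y\in a^\top$ one has $\Gamma(x,a,y,b,z)\in{}^\top b$. That is, the maps $\Pi^+_{ab}:a^\top\times{}^\top b\times a^\top\to a^\top$ and $\Pi^-_{ab}:{}^\top b\times a^\top\times{}^\top b\to{}^\top b$, both given by $(x,y,z)\mapsto\Gamma(x,a,y,b,z)$, are well-defined.
   Context: $(\Omega,+)$ is a group written additively but not necessarily abelian. For subsets $x,y$, $x\top y$ means every $\omega$ has a unique decomposition $\omega=\xi+\eta$ with $\xi\in x,\eta\in y$; $a^\top=\{x\subseteq\Omega: a\top x\}$, ${}^\top b=\{x\subseteq\Omega: x\top b\}$. $\Gamma(x,a,y,b,z)=\{\omega:\exists\alpha\in a,\beta\in b:\ \alpha+\omega+\beta\in y,\ \alpha+\omega\in z,\ \omega+\beta\in x\}$. *)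

theory Defs
  imports Main
begin

text \<open>The ambient group (Omega,+) is the type 'a of class group_add (additive, not
necessarily commutative); Omega = UNIV.\<close>

definition add_subgroup :: "'a::group_add set \<Rightarrow> bool" where
  "add_subgroup a \<longleftrightarrow> 0 \<in> a \<and> (\<forall>u\<in>a. \<forall>v\<in>a. u + v \<in> a) \<and> (\<forall>u\<in>a. - u \<in> a)"

definition transv :: "'a::group_add set \<Rightarrow> 'a set \<Rightarrow> bool" (infix "\<top>\<^sub>T" 50) where
  "x \<top>\<^sub>T y \<longleftrightarrow> (\<forall>\<omega>. \<exists>!p. fst p \<in> x \<and> snd p \<in> y \<and> \<omega> = fst p + snd p)"

definition right_transv :: "'a::group_add set \<Rightarrow> 'a set set" where
  "right_transv a = {x. a \<top>\<^sub>T x}"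

definition left_transv :: "'a::group_add set \<Rightarrow> 'a set set" where
  "left_transv b = {x. x \<top>\<^sub>T b}"

definition Gamma :: "'a::group_add set \<Rightarrow> 'a set \<Rightarrow> 'a set \<Rightarrow> 'a set \<Rightarrow> 'a set \<Rightarrow> 'a set" where
  "Gamma x a y b z = {\<omega>. \<exists>\<alpha>\<in>a. \<exists>\<beta>\<in>b. \<alpha> + \<omega> + \<beta> \<in> y \<and> \<alpha> + \<omega> \<in> z \<and> \<omega> + \<beta> \<in> x}"

end

theory Submission
  imports Defs
begin

lemma sg: assumes "add_subgroup a"
  shows "0 \<in> a" "u \<in> a \<Longrightarrow> v \<in> a \<Longrightarrow> u + v \<in> a" "u \<in> a \<Longrightarrow> - u \<in> a"
  using assms unfolding add_subgroup_def by auto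

lemma RT:
  assumes "add_subgroup a"
  shows "a \<top>\<^sub>T x \<longleftrightarrow> (\<forall>\<omega>. \<exists>\<xi>\<in>x. \<omega> + - \<xi> \<in> a) \<and> (\<forall>\<xi>\<in>x. \<forall>\<xi>'\<in>x. \<xi> + - \<xi>' \<in> a \<longrightarrow> \<xi> = \<xi>')"
proof
  assume h: "a \<top>\<^sub>T x"
  show "(\<forall>\<omega>. \<exists>\<xi>\<in>x. \<omega> + - \<xi> \<in> a) \<and> (\<forall>\<xi>\<in>x. \<forall>\<xi>'\<in>x. \<xi> + - \<xi>' \<in> a \<longrightarrow> \<xi> = \<xi>')"
  proof (intro conjI allI ballI impI)
    fix \<omega>
    from h obtain p where "fst p \<in> a" "snd p \<in> x" "\<omega> = fst p + snd p" unfolding transv_def by blast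
    then show "\<exists>\<xi>\<in>x. \<omega> + - \<xi> \<in> a" by (intro bexI[of _ "snd p"]) (auto simp: add.assoc)
  next
    fix \<xi> \<xi>' assume m: "\<xi> \<in> x" "\<xi>' \<in> x" "\<xi> + - \<xi>' \<in> a"
    from h have u: "\<exists>!p. fst p \<in> a \<and> snd p \<in> x \<and> \<xi> = fst p + snd p" unfolding transv_def by blast
    have P0: "fst (0, \<xi>) \<in> a \<and> snd (0, \<xi>) \<in> x \<and> \<xi> = fst (0, \<xi>) + snd (0, \<xi>)"
      using m sg[OF assms] by simp
    have P1: "fst (\<xi> + - \<xi>', \<xi>') \<in> a \<and> snd (\<xi> + - \<xi>', \<xi>') \<in> x \<and> \<xi> = fst (\<xi> + - \<xi>', \<xi>') + snd (\<xi> + - \<xi>', \<xi>')"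
      using m by (simp add: add.assoc)
    have "(0, \<xi>) = (\<xi> + - \<xi>', \<xi>')" using u P0 P1 by blast
    then show "\<xi> = \<xi>'" by simp
  qed
next
  assume h: "(\<forall>\<omega>. \<exists>\<xi>\<in>x. \<omega> + - \<xi> \<in> a) \<and> (\<forall>\<xi>\<in>x. \<forall>\<xi>'\<in>x. \<xi> + - \<xi>' \<in> a \<longrightarrow> \<xi> = \<xi>')"
  show "a \<top>\<^sub>T x" unfolding transv_def
  proof
    fix \<omega>
    from h obtain \<xi> where "\<xi> \<in> x" "\<omega> + - \<xi> \<in> a" by blast
    show "\<exists>!p. fst p \<in> a \<and> snd p \<in> x \<and> \<omega> = fst p + snd p"
    proof (rule ex1I[of _ "(\<omega> + - \<xi>, \<xi>)"])
      show "fst (\<omega> + - \<xi>, \<xi>) \<in> a \<and> snd (\<omega> + - \<xi>, \<xi>) \<in> x \<and> \<omega> = fst (\<omega> + - \<xi>, \<xi>) + snd (\<omega> + - \<xi>, \<xi>)"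
        using \<open>\<xi> \<in> x\<close> \<open>\<omega> + - \<xi> \<in> a\<close> by (simp add: add.assoc)
    next
      fix p assume p: "fst p \<in> a \<and> snd p \<in> x \<and> \<omega> = fst p + snd p"
      have "snd p + - \<xi> \<in> a"
      proof -
        have "snd p + - \<xi> = - fst p + (\<omega> + - \<xi>)" using p by (simp add: add.assoc diff_conv_add_uminus del: add_uminus_conv_diff)
        then show ?thesis using p \<open>\<omega> + - \<xi> \<in> a\<close> sg[OF assms] by metis
      qed
      then have "snd p = \<xi>" using h p \<open>\<xi> \<in> x\<close> by blast
      then show "p = (\<omega> + - \<xi>, \<xi>)" using p by (cases p) (auto simp: add.assoc)
    qed
  qed
qed

lemma LT:
  assumes "add_subgroup b"
  shows "x \<top>\<^sub>T b \<longleftrightarrow> (\<forall>\<omega>. \<exists>\<xi>\<in>x. - \<xi> + \<omega> \<in> b) \<and> (\<forall>\<xi>\<in>x. \<forall>\<xi>'\<in>x. - \<xi> + \<xi>' \<in> b \<longrightarrow> \<xi> = \<xi>')"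
proof
  assume h: "x \<top>\<^sub>T b"
  show "(\<forall>\<omega>. \<exists>\<xi>\<in>x. - \<xi> + \<omega> \<in> b) \<and> (\<forall>\<xi>\<in>x. \<forall>\<xi>'\<in>x. - \<xi> + \<xi>' \<in> b \<longrightarrow> \<xi> = \<xi>')"
  proof (intro conjI allI ballI impI)
    fix \<omega>
    from h obtain p where "fst p \<in> x" "snd p \<in> b" "\<omega> = fst p + snd p" unfolding transv_def by blast
    then show "\<exists>\<xi>\<in>x. - \<xi> + \<omega> \<in> b" by (intro bexI[of _ "fst p"]) (auto simp: add.assoc[symmetric])
  next
    fix \<xi> \<xi>' assume m: "\<xi> \<in> x" "\<xi>' \<in> x" "- \<xi> + \<xi>' \<in> b"
    from h have u: "\<exists>!p. fst p \<in> x \<and> snd p \<in> b \<and> \<xi>' = fst p + snd p" unfolding transv_def by blast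
    have P0: "fst (\<xi>', 0) \<in> x \<and> snd (\<xi>', 0) \<in> b \<and> \<xi>' = fst (\<xi>', 0) + snd (\<xi>', 0)"
      using m sg[OF assms] by simp
    have P1: "fst (\<xi>, - \<xi> + \<xi>') \<in> x \<and> snd (\<xi>, - \<xi> + \<xi>') \<in> b \<and> \<xi>' = fst (\<xi>, - \<xi> + \<xi>') + snd (\<xi>, - \<xi> + \<xi>')"
      using m by (simp add: add.assoc[symmetric])
    have "(\<xi>', 0) = (\<xi>, - \<xi> + \<xi>')" using u P0 P1 by blast
    then show "\<xi> = \<xi>'" by simp
  qed
next
  assume h: "(\<forall>\<omega>. \<exists>\<xi>\<in>x. - \<xi> + \<omega> \<in> b) \<and> (\<forall>\<xi>\<in>x. \<forall>\<xi>'\<in>x. - \<xi> + \<xi>' \<in> b \<longrightarrow> \<xi> = \<xi>')"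
  show "x \<top>\<^sub>T b" unfolding transv_def
  proof
    fix \<omega>
    from h obtain \<xi> where "\<xi> \<in> x" "- \<xi> + \<omega> \<in> b" by blast
    show "\<exists>!p. fst p \<in> x \<and> snd p \<in> b \<and> \<omega> = fst p + snd p"
    proof (rule ex1I[of _ "(\<xi>, - \<xi> + \<omega>)"])
      show "fst (\<xi>, - \<xi> + \<omega>) \<in> x \<and> snd (\<xi>, - \<xi> + \<omega>) \<in> b \<and> \<omega> = fst (\<xi>, - \<xi> + \<omega>) + snd (\<xi>, - \<xi> + \<omega>)"
        using \<open>\<xi> \<in> x\<close> \<open>- \<xi> + \<omega> \<in> b\<close> by (simp add: add.assoc[symmetric])
    next
      fix p assume p: "fst p \<in> x \<and> snd p \<in> b \<and> \<omega> = fst p + snd p"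
      have "- \<xi> + fst p \<in> b"
      proof -
        have "- \<xi> + fst p = (- \<xi> + \<omega>) + - snd p" using p by (simp add: add.assoc diff_conv_add_uminus del: add_uminus_conv_diff)
        then show ?thesis using p \<open>- \<xi> + \<omega> \<in> b\<close> sg[OF assms] by metis
      qed
      then have "\<xi> = fst p" using h p \<open>\<xi> \<in> x\<close> by blast
      then show "p = (\<xi>, - \<xi> + \<omega>)" using p by (cases p) (auto simp: add.assoc[symmetric])
    qed
  qed
qed


lemmas gs = add.assoc diff_conv_add_uminus

lemma part1:
  assumes A: "add_subgroup a" and B: "add_subgroup b"
    and x: "a \<top>\<^sub>T x" and z: "a \<top>\<^sub>T z" and y: "y \<top>\<^sub>T b"
  shows "a \<top>\<^sub>T Gamma x a y b z"
proof -
  note sa = sg[OF A] and sb = sg[OF B]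
  note X = x[unfolded RT[OF A]] and Z = z[unfolded RT[OF A]] and Y = y[unfolded LT[OF B]]
  show ?thesis unfolding RT[OF A]
  proof (intro conjI allI ballI impI)
    fix \<omega>0
    obtain \<zeta> where "\<zeta> \<in> z" "\<omega>0 + - \<zeta> \<in> a" using Z by blast
    obtain \<eta> where "\<eta> \<in> y" "- \<eta> + \<zeta> \<in> b" using Y by blast
    obtain \<xi> where "\<xi> \<in> x" "\<eta> + - \<xi> \<in> a" using X by blast
    let ?w = "\<xi> + - \<eta> + \<zeta>"
    have bb: "- \<zeta> + \<eta> \<in> b"
    proof -
      have "- \<zeta> + \<eta> = - (- \<eta> + \<zeta>)" by (simp add: minus_add)
      then show ?thesis using sb \<open>- \<eta> + \<zeta> \<in> b\<close> by metis
    qed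
    have "?w \<in> Gamma x a y b z" unfolding Gamma_def
    proof (intro CollectI bexI conjI)
      show "\<eta> + - \<xi> + ?w + (- \<zeta> + \<eta>) \<in> y" using \<open>\<eta> \<in> y\<close> by (simp add: gs del: add_uminus_conv_diff)
      show "\<eta> + - \<xi> + ?w \<in> z" using \<open>\<zeta> \<in> z\<close> by (simp add: gs del: add_uminus_conv_diff)
      show "?w + (- \<zeta> + \<eta>) \<in> x" using \<open>\<xi> \<in> x\<close> by (simp add: gs del: add_uminus_conv_diff)
    qed (use bb \<open>\<eta> + - \<xi> \<in> a\<close> in auto)
    moreover have "\<omega>0 + - ?w \<in> a"
    proof -
      have "\<omega>0 + - ?w = (\<omega>0 + - \<zeta>) + (\<eta> + - \<xi>)" by (simp add: gs minus_add del: add_uminus_conv_diff)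
      then show ?thesis using sa \<open>\<omega>0 + - \<zeta> \<in> a\<close> \<open>\<eta> + - \<xi> \<in> a\<close> by metis
    qed
    ultimately show "\<exists>\<xi>\<in>Gamma x a y b z. \<omega>0 + - \<xi> \<in> a" by blast
  next
    fix \<omega> \<omega>' assume w: "\<omega> \<in> Gamma x a y b z" "\<omega>' \<in> Gamma x a y b z" and d: "\<omega> + - \<omega>' \<in> a"
    obtain \<alpha> \<beta> where ab: "\<alpha> \<in> a" "\<beta> \<in> b" "\<alpha> + \<omega> + \<beta> \<in> y" "\<alpha> + \<omega> \<in> z" "\<omega> + \<beta> \<in> x"
      using w(1) unfolding Gamma_def by blast
    obtain \<alpha>' \<beta>' where ab': "\<alpha>' \<in> a" "\<beta>' \<in> b" "\<alpha>' + \<omega>' + \<beta>' \<in> y" "\<alpha>' + \<omega>' \<in> z" "\<omega>' + \<beta>' \<in> x"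
      using w(2) unfolding Gamma_def by blast
    have "(\<alpha> + \<omega>) + - (\<alpha>' + \<omega>') = \<alpha> + (\<omega> + - \<omega>') + - \<alpha>'" by (simp add: gs minus_add del: add_uminus_conv_diff)
    then have "(\<alpha> + \<omega>) + - (\<alpha>' + \<omega>') \<in> a" using sa ab(1) ab'(1) d by metis
    then have e1: "\<alpha> + \<omega> = \<alpha>' + \<omega>'" using Z ab(4) ab'(4) by blast
    have "- (\<alpha> + \<omega> + \<beta>) + (\<alpha>' + \<omega>' + \<beta>') = - \<beta> + \<beta>'" unfolding e1 by (simp add: gs minus_add del: add_uminus_conv_diff)
    then have "- (\<alpha> + \<omega> + \<beta>) + (\<alpha>' + \<omega>' + \<beta>') \<in> b" using sb ab(2) ab'(2) by metis
    then have "\<alpha> + \<omega> + \<beta> = \<alpha>' + \<omega>' + \<beta>'" using Y ab(3) ab'(3) by blast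
    then have e2: "\<beta> = \<beta>'" unfolding e1 by (simp add: add.assoc)
    have "(\<omega> + \<beta>) + - (\<omega>' + \<beta>) = \<omega> + - \<omega>'" by (simp add: gs minus_add del: add_uminus_conv_diff)
    then have "(\<omega> + \<beta>) + - (\<omega>' + \<beta>) \<in> a" using d by simp
    then have "\<omega> + \<beta> = \<omega>' + \<beta>" using X ab(5) ab'(5) e2 by blast
    then show "\<omega> = \<omega>'" by simp
  qed
qed


lemma part2:
  assumes A: "add_subgroup a" and B: "add_subgroup b"
    and x: "x \<top>\<^sub>T b" and z: "z \<top>\<^sub>T b" and y: "a \<top>\<^sub>T y"
  shows "Gamma x a y b z \<top>\<^sub>T b"
proof -
  note sa = sg[OF A] and sb = sg[OF B]
  note X = x[unfolded LT[OF B]] and Z = z[unfolded LT[OF B]] and Y = y[unfolded RT[OF A]]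
  show ?thesis unfolding LT[OF B]
  proof (intro conjI allI ballI impI)
    fix \<omega>0
    obtain \<xi> where "\<xi> \<in> x" "- \<xi> + \<omega>0 \<in> b" using X by blast
    obtain \<eta> where "\<eta> \<in> y" "\<xi> + - \<eta> \<in> a" using Y by blast
    obtain \<zeta> where "\<zeta> \<in> z" "- \<zeta> + \<eta> \<in> b" using Z by blast
    let ?w = "\<xi> + - \<eta> + \<zeta>"
    have aa: "\<eta> + - \<xi> \<in> a"
    proof -
      have "\<eta> + - \<xi> = - (\<xi> + - \<eta>)" by (simp add: minus_add)
      then show ?thesis using sa \<open>\<xi> + - \<eta> \<in> a\<close> by metis
    qed
    have "?w \<in> Gamma x a y b z" unfolding Gamma_def
    proof (intro CollectI bexI conjI)
      show "\<eta> + - \<xi> + ?w + (- \<zeta> + \<eta>) \<in> y" using \<open>\<eta> \<in> y\<close> by (simp add: gs del: add_uminus_conv_diff)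
      show "\<eta> + - \<xi> + ?w \<in> z" using \<open>\<zeta> \<in> z\<close> by (simp add: gs del: add_uminus_conv_diff)
      show "?w + (- \<zeta> + \<eta>) \<in> x" using \<open>\<xi> \<in> x\<close> by (simp add: gs del: add_uminus_conv_diff)
    qed (use aa \<open>- \<zeta> + \<eta> \<in> b\<close> in auto)
    moreover have "- ?w + \<omega>0 \<in> b"
    proof -
      have "- ?w + \<omega>0 = (- \<zeta> + \<eta>) + (- \<xi> + \<omega>0)" by (simp add: gs minus_add del: add_uminus_conv_diff)
      then show ?thesis using sb \<open>- \<zeta> + \<eta> \<in> b\<close> \<open>- \<xi> + \<omega>0 \<in> b\<close> by metis
    qed
    ultimately show "\<exists>\<xi>\<in>Gamma x a y b z. - \<xi> + \<omega>0 \<in> b" by blast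
  next
    fix \<omega> \<omega>' assume w: "\<omega> \<in> Gamma x a y b z" "\<omega>' \<in> Gamma x a y b z" and d: "- \<omega> + \<omega>' \<in> b"
    obtain \<alpha> \<beta> where ab: "\<alpha> \<in> a" "\<beta> \<in> b" "\<alpha> + \<omega> + \<beta> \<in> y" "\<alpha> + \<omega> \<in> z" "\<omega> + \<beta> \<in> x"
      using w(1) unfolding Gamma_def by blast
    obtain \<alpha>' \<beta>' where ab': "\<alpha>' \<in> a" "\<beta>' \<in> b" "\<alpha>' + \<omega>' + \<beta>' \<in> y" "\<alpha>' + \<omega>' \<in> z" "\<omega>' + \<beta>' \<in> x"
      using w(2) unfolding Gamma_def by blast
    have "- (\<omega> + \<beta>) + (\<omega>' + \<beta>') = - \<beta> + (- \<omega> + \<omega>') + \<beta>'" by (simp add: gs minus_add del: add_uminus_conv_diff)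
    then have "- (\<omega> + \<beta>) + (\<omega>' + \<beta>') \<in> b" using sb ab(2) ab'(2) d by metis
    then have e1: "\<omega> + \<beta> = \<omega>' + \<beta>'" using X ab(5) ab'(5) by blast
    have "(\<alpha> + \<omega> + \<beta>) + - (\<alpha>' + \<omega>' + \<beta>') = \<alpha> + - \<alpha>'"
      by (simp add: add.assoc e1 del: add_uminus_conv_diff) (simp add: gs minus_add del: add_uminus_conv_diff)
    then have "(\<alpha> + \<omega> + \<beta>) + - (\<alpha>' + \<omega>' + \<beta>') \<in> a" using sa ab(1) ab'(1) by metis
    then have "\<alpha> + \<omega> + \<beta> = \<alpha>' + \<omega>' + \<beta>'" using Y ab(3) ab'(3) by blast
    then have e2: "\<alpha> = \<alpha>'" by (simp add: add.assoc e1)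
    have "- (\<alpha> + \<omega>) + (\<alpha> + \<omega>') = - \<omega> + \<omega>'" by (simp add: gs minus_add del: add_uminus_conv_diff)
    then have "- (\<alpha> + \<omega>) + (\<alpha> + \<omega>') \<in> b" using d by simp
    then have "\<alpha> + \<omega> = \<alpha> + \<omega>'" using Z ab(4) ab'(4) e2 by blast
    then show "\<omega> = \<omega>'" by simp
  qed
qed

theorem theorem7p1:
  fixes a b :: "'a::group_add set"
  assumes "add_subgroup a" and "add_subgroup b"
  shows "(\<forall>x y z. x \<in> right_transv a \<and> z \<in> right_transv a \<and> y \<in> left_transv b
            \<longrightarrow> Gamma x a y b z \<in> right_transv a)
       \<and> (\<forall>x y z. x \<in> left_transv b \<and> z \<in> left_transv b \<and> y \<in> right_transv a
            \<longrightarrow> Gamma x a y b z \<in> left_transv b)"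
  using part1[OF assms] part2[OF assms] unfolding right_transv_def left_transv_def by blast

end
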